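(* Let ${\cal I}_1,\dots,{\cal I}_k$ ($k\ge 2$) be nonempty subsets of $E$ and let $\widetilde\lessdot$ be the restriction of $\lessdot$ to the $2k$ handles $\mathrm{LH}({\cal I}_i),\mathrm{UH}({\cal I}_i)$, $i=1,\dots,k$ (assume these $2k$ endpoints are distinct). Then: (i) if the two $\widetilde\lessdot$-smallest handles are lower handles $\mathrm{LH}({\cal I}_i)$ and $\mathrm{LH}({\cal I}_j)$ with $i\ne j$, then no ${\cal I}_t$ is minimal; (ii) if the $\widetilde\lessdot$-smallest handle is $\mathrm{LH}({\cal I}_i)$, then no ${\cal I}_t$ with $t\neq i$ is minimal, and ${\cal I}_i$ is minimal iff no $\mathrm{LH}({\cal I}_j)$ with $j\ne i$ satisfies $\mathrm{LH}({\cal I}_j)\lessdot\mathrm{UH}({\cal I}_i)$; (iii) if $\widetilde\lessdot$ begins with a maximal initial block of upper handles $\mathrm{UH}({\cal I}_{i_1}),\dots,\mathrm{UH}({\cal I}_{i_s})$ ($s\ge1$) followed by the lower handle $\mathrm{LH}({\cal I}_j)$, then each ${\cal I}_{i_1},\dots,{\cal I}_{i_s}$ is minimal, ${\cal I}_j$ is minimal iff no lower handle $\mathrm{LH}({\cal I}_t)$ with $t\ne j$ satisfies $\mathrm{LH}({\cal I}_t)\lessdot\mathrm{UH}({\cal I}_j)$, and no other ${\cal I}_t$ is minimal.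
   Context: Let $E$ be a finite set and for each $a\in E$ let $I_a=(\ell_a,r_a)$ be a nonempty open real interval, $\ell_a<r_a$; define $a\vartriangleleft b$ iff $r_a\le\ell_b$ (an interval order). Let $\lessdot$ be the linear ordering of all endpoints $\ell_a,r_a$ by real value from left to right, where among endpoints with equal real value all right endpoints come first (arbitrary order among them) and then all left endpoints (arbitrary order). For nonempty ${\cal I}_1,{\cal I}_2\subseteq E$, ${\cal I}_1\vartriangleleft{\cal I}_2$ means there exist $a\in{\cal I}_1$, $b\in{\cal I}_2$ with $a\vartriangleleft b$. For nonempty ${\cal I}\subseteq E$, $\mathrm{LH}({\cal I})$ is the $\lessdot$-minimum of $\{r_x:x\in{\cal I}\}$ and $\mathrm{UH}({\cal I})$ is the $\lessdot$-maximum of $\{\ell_x:x\in{\cal I}\}$. Among ${\cal I}_1,\dots,{\cal I}_k$, ${\cal I}_j$ is minimal if there is no $i\ne j$ with ${\cal I}_i\vartriangleleft{\cal I}_j$. *)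

theory Defs
  imports Main "HOL.Real"
begin

datatype 'a endpt = Lft 'a | Rgt 'a

fun epval :: "('a \<Rightarrow> real) \<Rightarrow> ('a \<Rightarrow> real) \<Rightarrow> 'a endpt \<Rightarrow> real" where
  "epval l r (Lft a) = l a"
| "epval l r (Rgt a) = r a"

definition endpts :: "'a set \<Rightarrow> 'a endpt set" where
  "endpts E = Lft ` E \<union> Rgt ` E"

definition admissible_order ::
  "'a set \<Rightarrow> ('a \<Rightarrow> real) \<Rightarrow> ('a \<Rightarrow> real) \<Rightarrow> ('a endpt \<Rightarrow> 'a endpt \<Rightarrow> bool) \<Rightarrow> bool" where
  "admissible_order E l r lt \<longleftrightarrow>
     (\<forall>p\<in>endpts E. \<not> lt p p) \<and>
     (\<forall>p\<in>endpts E. \<forall>q\<in>endpts E. \<forall>s\<in>endpts E. lt p q \<longrightarrow> lt q s \<longrightarrow> lt p s) \<and>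
     (\<forall>p\<in>endpts E. \<forall>q\<in>endpts E. p \<noteq> q \<longrightarrow> lt p q \<or> lt q p) \<and>
     (\<forall>p\<in>endpts E. \<forall>q\<in>endpts E. epval l r p < epval l r q \<longrightarrow> lt p q) \<and>
     (\<forall>a\<in>E. \<forall>b\<in>E. r a = l b \<longrightarrow> lt (Rgt a) (Lft b))"

definition iv_lt :: "('a \<Rightarrow> real) \<Rightarrow> ('a \<Rightarrow> real) \<Rightarrow> 'a \<Rightarrow> 'a \<Rightarrow> bool" where
  "iv_lt l r a b \<longleftrightarrow> r a \<le> l b"

definition set_lt :: "('a \<Rightarrow> real) \<Rightarrow> ('a \<Rightarrow> real) \<Rightarrow> 'a set \<Rightarrow> 'a set \<Rightarrow> bool" where
  "set_lt l r I1 I2 \<longleftrightarrow> (\<exists>a\<in>I1. \<exists>b\<in>I2. iv_lt l r a b)"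

definition LH :: "('a endpt \<Rightarrow> 'a endpt \<Rightarrow> bool) \<Rightarrow> 'a set \<Rightarrow> 'a endpt" where
  "LH lt I = (THE p. p \<in> Rgt ` I \<and> (\<forall>q\<in>Rgt ` I. q \<noteq> p \<longrightarrow> lt p q))"

definition UH :: "('a endpt \<Rightarrow> 'a endpt \<Rightarrow> bool) \<Rightarrow> 'a set \<Rightarrow> 'a endpt" where
  "UH lt I = (THE p. p \<in> Lft ` I \<and> (\<forall>q\<in>Lft ` I. q \<noteq> p \<longrightarrow> lt q p))"

definition is_minimal :: "('a \<Rightarrow> real) \<Rightarrow> ('a \<Rightarrow> real) \<Rightarrow> (nat \<Rightarrow> 'a set) \<Rightarrow> nat \<Rightarrow> nat \<Rightarrow> bool" where
  "is_minimal l r I k j \<longleftrightarrow> \<not> (\<exists>i<k. i \<noteq> j \<and> set_lt l r (I i) (I j))"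

end

theory Submission
  imports Defs
begin

lemma ex_min_lt:
  assumes "finite S" "S \<noteq> {}" "S \<subseteq> D"
    and tr: "\<forall>p\<in>D. \<forall>q\<in>D. \<forall>s\<in>D. lt p q \<longrightarrow> lt q s \<longrightarrow> lt p s"
    and tot: "\<forall>p\<in>D. \<forall>q\<in>D. p \<noteq> q \<longrightarrow> lt p q \<or> lt q p"
  shows "\<exists>p\<in>S. \<forall>q\<in>S. q \<noteq> p \<longrightarrow> lt p q"
  using assms(1,2,3)
proof (induction S rule: finite_ne_induct)
  case (singleton x) then show ?case by auto
next
  case (insert x F)
  then obtain p where p: "p \<in> F" "\<forall>q\<in>F. q \<noteq> p \<longrightarrow> lt p q" by auto
  show ?case
  proof (cases "lt x p")
    case True
    have "\<forall>q\<in>insert x F. q \<noteq> x \<longrightarrow> lt x q"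
    proof (intro ballI impI)
      fix q assume q: "q \<in> insert x F" "q \<noteq> x"
      then have "q \<in> F" by auto
      show "lt x q"
      proof (cases "q = p")
        case True then show ?thesis using \<open>lt x p\<close> by simp
      next
        case False
        then have "lt p q" using p \<open>q \<in> F\<close> by auto
        moreover have "x \<in> D" "p \<in> D" "q \<in> D" using insert.prems \<open>q \<in> F\<close> p(1) by auto
        ultimately show ?thesis using tr \<open>lt x p\<close> by blast
      qed
    qed
    then show ?thesis by auto
  next
    case False
    have "x \<noteq> p" using insert.hyps p(1) by auto
    then have "lt p x" using tot False insert.prems p(1) by blast
    then show ?thesis using p by auto
  qed
qed

lemma ex_max_lt:
  assumes "finite S" "S \<noteq> {}" "S \<subseteq> D"
    and tr: "\<forall>p\<in>D. \<forall>q\<in>D. \<forall>s\<in>D. lt p q \<longrightarrow> lt q s \<longrightarrow> lt p s"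
    and tot: "\<forall>p\<in>D. \<forall>q\<in>D. p \<noteq> q \<longrightarrow> lt p q \<or> lt q p"
  shows "\<exists>p\<in>S. \<forall>q\<in>S. q \<noteq> p \<longrightarrow> lt q p"
  using assms(1,2,3)
proof (induction S rule: finite_ne_induct)
  case (singleton x) then show ?case by auto
next
  case (insert x F)
  then obtain p where p: "p \<in> F" "\<forall>q\<in>F. q \<noteq> p \<longrightarrow> lt q p" by auto
  show ?case
  proof (cases "lt p x")
    case True
    have "\<forall>q\<in>insert x F. q \<noteq> x \<longrightarrow> lt q x"
    proof (intro ballI impI)
      fix q assume q: "q \<in> insert x F" "q \<noteq> x"
      then have "q \<in> F" by auto
      show "lt q x"
      proof (cases "q = p")
        case True then show ?thesis using \<open>lt p x\<close> by simp
      next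
        case False
        then have "lt q p" using p \<open>q \<in> F\<close> by auto
        moreover have "x \<in> D" "p \<in> D" "q \<in> D" using insert.prems \<open>q \<in> F\<close> p(1) by auto
        ultimately show ?thesis using tr \<open>lt p x\<close> by blast
      qed
    qed
    then show ?thesis by auto
  next
    case False
    have "x \<noteq> p" using insert.hyps p(1) by auto
    then have "lt x p" using tot False insert.prems p(1) by blast
    then show ?thesis using p by auto
  qed
qed

lemma adm_irr: "admissible_order E l r lt \<Longrightarrow> \<forall>p\<in>endpts E. \<not> lt p p"
  unfolding admissible_order_def by (elim conjE)
lemma adm_tr: "admissible_order E l r lt \<Longrightarrow> \<forall>p\<in>endpts E. \<forall>q\<in>endpts E. \<forall>s\<in>endpts E. lt p q \<longrightarrow> lt q s \<longrightarrow> lt p s"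
  unfolding admissible_order_def by (elim conjE)
lemma adm_tot: "admissible_order E l r lt \<Longrightarrow> \<forall>p\<in>endpts E. \<forall>q\<in>endpts E. p \<noteq> q \<longrightarrow> lt p q \<or> lt q p"
  unfolding admissible_order_def by (elim conjE)
lemma adm_val: "admissible_order E l r lt \<Longrightarrow> \<forall>p\<in>endpts E. \<forall>q\<in>endpts E. epval l r p < epval l r q \<longrightarrow> lt p q"
  unfolding admissible_order_def by (elim conjE)
lemma adm_tie: "admissible_order E l r lt \<Longrightarrow> \<forall>a\<in>E. \<forall>b\<in>E. r a = l b \<longrightarrow> lt (Rgt a) (Lft b)"
  unfolding admissible_order_def by (elim conjE)

lemma LH_prop:
  assumes fin: "finite E" and ord: "admissible_order E l r lt" and A: "A \<subseteq> E" "A \<noteq> {}"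
  shows "LH lt A \<in> Rgt ` A \<and> (\<forall>q\<in>Rgt ` A. q \<noteq> LH lt A \<longrightarrow> lt (LH lt A) q)"
proof -
  have sub: "Rgt ` A \<subseteq> endpts E" using A unfolding endpts_def by auto
  have fA: "finite A" using finite_subset[OF A(1) fin] .
  have trE: "\<forall>p\<in>endpts E. \<forall>q\<in>endpts E. \<forall>s\<in>endpts E. lt p q \<longrightarrow> lt q s \<longrightarrow> lt p s"
    and totE: "\<forall>p\<in>endpts E. \<forall>q\<in>endpts E. p \<noteq> q \<longrightarrow> lt p q \<or> lt q p"
    by (rule adm_tr[OF ord], rule adm_tot[OF ord])
  have "finite (Rgt ` A)" "Rgt ` A \<noteq> {}" using fA A by auto
  from ex_min_lt[of "Rgt ` A" "endpts E" lt, OF this sub trE totE]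
  obtain p where p: "p \<in> Rgt ` A" "\<forall>q\<in>Rgt ` A. q \<noteq> p \<longrightarrow> lt p q"
    by (elim bexE)
  have uniq: "p' = p" if h: "p' \<in> Rgt ` A" "\<forall>q\<in>Rgt ` A. q \<noteq> p' \<longrightarrow> lt p' q" for p'
  proof (rule ccontr)
    assume ne: "p' \<noteq> p"
    have 1: "lt p p'" using p(2) h(1) ne by blast
    have 2: "lt p' p" using h(2) p(1) ne by metis
    have e: "p \<in> endpts E" "p' \<in> endpts E" using sub p(1) h(1) by auto
    have "lt p p" using trE[rule_format, OF e(1) e(2) e(1) 1 2] .
    moreover have "\<forall>p\<in>endpts E. \<not> lt p p" using adm_irr[OF ord] .
    ultimately show False using e by blast
  qed
  have "LH lt A = p" unfolding LH_def
  proof (rule the_equality)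
    fix p' assume "p' \<in> Rgt ` A \<and> (\<forall>q\<in>Rgt ` A. q \<noteq> p' \<longrightarrow> lt p' q)"
    then show "p' = p" using uniq by (elim conjE)
  qed (use p in simp)
  then show ?thesis using p by simp
qed

lemma UH_prop:
  assumes fin: "finite E" and ord: "admissible_order E l r lt" and A: "A \<subseteq> E" "A \<noteq> {}"
  shows "UH lt A \<in> Lft ` A \<and> (\<forall>q\<in>Lft ` A. q \<noteq> UH lt A \<longrightarrow> lt q (UH lt A))"
proof -
  have sub: "Lft ` A \<subseteq> endpts E" using A unfolding endpts_def by auto
  have fA: "finite A" using finite_subset[OF A(1) fin] .
  have trE: "\<forall>p\<in>endpts E. \<forall>q\<in>endpts E. \<forall>s\<in>endpts E. lt p q \<longrightarrow> lt q s \<longrightarrow> lt p s"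
    and totE: "\<forall>p\<in>endpts E. \<forall>q\<in>endpts E. p \<noteq> q \<longrightarrow> lt p q \<or> lt q p"
    by (rule adm_tr[OF ord], rule adm_tot[OF ord])
  have "finite (Lft ` A)" "Lft ` A \<noteq> {}" using fA A by auto
  from ex_max_lt[of "Lft ` A" "endpts E" lt, OF this sub trE totE]
  obtain p where p: "p \<in> Lft ` A" "\<forall>q\<in>Lft ` A. q \<noteq> p \<longrightarrow> lt q p"
    by (elim bexE)
  have uniq: "p' = p" if h: "p' \<in> Lft ` A" "\<forall>q\<in>Lft ` A. q \<noteq> p' \<longrightarrow> lt q p'" for p'
  proof (rule ccontr)
    assume ne: "p' \<noteq> p"
    have 1: "lt p' p" using p(2) h(1) ne by blast
    have 2: "lt p p'" using h(2) p(1) ne by metis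
    have e: "p \<in> endpts E" "p' \<in> endpts E" using sub p(1) h(1) by auto
    have "lt p p" using trE[rule_format, OF e(1) e(2) e(1) 2 1] .
    moreover have "\<forall>p\<in>endpts E. \<not> lt p p" using adm_irr[OF ord] .
    ultimately show False using e by blast
  qed
  have "UH lt A = p" unfolding UH_def
  proof (rule the_equality)
    fix p' assume "p' \<in> Lft ` A \<and> (\<forall>q\<in>Lft ` A. q \<noteq> p' \<longrightarrow> lt q p')"
    then show "p' = p" using uniq by (elim conjE)
  qed (use p in simp)
  then show ?thesis using p by simp
qed

lemma set_lt_iff:
  assumes fin: "finite E" and ord: "admissible_order E l r lt"
    and A: "A \<subseteq> E" "A \<noteq> {}" and B: "B \<subseteq> E" "B \<noteq> {}"
  shows "set_lt l r A B \<longleftrightarrow> lt (LH lt A) (UH lt B)"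
proof
  note irr = adm_irr[OF ord] and tr = adm_tr[OF ord] and val = adm_val[OF ord]
    and tie = adm_tie[OF ord]
  note LA = LH_prop[OF fin ord A] and UB = UH_prop[OF fin ord B]
  obtain a0 where a0: "a0 \<in> A" "LH lt A = Rgt a0" using LA by (elim conjE imageE) simp
  obtain b0 where b0: "b0 \<in> B" "UH lt B = Lft b0" using UB by (elim conjE imageE) simp
  have LAe: "LH lt A \<in> endpts E" using a0 A unfolding endpts_def by auto
  have UBe: "UH lt B \<in> endpts E" using b0 B unfolding endpts_def by auto
  {
    assume "set_lt l r A B"
    then obtain a b where ab: "a \<in> A" "b \<in> B" "r a \<le> l b"
      unfolding set_lt_def iv_lt_def by (elim bexE) simp
    have aE: "a \<in> E" and bE: "b \<in> E" using ab A B by auto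
    have ae: "Rgt a \<in> endpts E" and be: "Lft b \<in> endpts E"
      using aE bE unfolding endpts_def by auto
    have 1: "lt (Rgt a) (Lft b)"
    proof (cases "r a = l b")
      case True then show ?thesis using tie[rule_format, OF aE bE] by simp
    next
      case False then have "epval l r (Rgt a) < epval l r (Lft b)" using ab by simp
      then show ?thesis using val[rule_format, OF ae be] by simp
    qed
    have 2: "LH lt A = Rgt a \<or> lt (LH lt A) (Rgt a)"
      using LA ab(1) by (cases "LH lt A = Rgt a") auto
    have 3: "UH lt B = Lft b \<or> lt (Lft b) (UH lt B)"
      using UB ab(2) by (cases "UH lt B = Lft b") auto
    have 4: "lt (LH lt A) (Lft b)"
    proof (cases "LH lt A = Rgt a")
      case True then show ?thesis using 1 by simp
    next
      case False then have "lt (LH lt A) (Rgt a)" using 2 by simp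
      then show ?thesis using tr[rule_format, OF LAe ae be _ 1] by simp
    qed
    show "lt (LH lt A) (UH lt B)"
    proof (cases "UH lt B = Lft b")
      case True then show ?thesis using 4 by simp
    next
      case False then have "lt (Lft b) (UH lt B)" using 3 by simp
      then show ?thesis using tr[rule_format, OF LAe be UBe 4] by simp
    qed
  }
  {
    assume h: "lt (LH lt A) (UH lt B)"
    have "r a0 \<le> l b0"
    proof (rule ccontr)
      assume "\<not> r a0 \<le> l b0"
      then have "epval l r (Lft b0) < epval l r (Rgt a0)" by simp
      then have "lt (Lft b0) (Rgt a0)" using val[rule_format, OF UBe[unfolded b0(2)] LAe[unfolded a0(2)]] by simp
      moreover have "lt (Rgt a0) (Lft b0)" using h a0 b0 by simp
      ultimately have "lt (Rgt a0) (Rgt a0)"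
        using tr[rule_format, OF LAe[unfolded a0(2)] UBe[unfolded b0(2)] LAe[unfolded a0(2)]] by simp
      then show False using irr LAe a0(2) by auto
    qed
    then show "set_lt l r A B" unfolding set_lt_def iv_lt_def using a0(1) b0(1) by blast
  }
qed

theorem mainTheorem7:
  fixes E :: "'a set" and l r :: "'a \<Rightarrow> real"
    and lt :: "'a endpt \<Rightarrow> 'a endpt \<Rightarrow> bool"
    and I :: "nat \<Rightarrow> 'a set" and k :: nat
  assumes finE: "finite E"
    and intervals: "\<forall>a\<in>E. l a < r a"
    and order: "admissible_order E l r lt"
    and k2: "k \<ge> 2"
    and sub: "\<forall>i<k. I i \<subseteq> E \<and> I i \<noteq> {}"
    and distLH: "inj_on (\<lambda>i. LH lt (I i)) {..<k}"
    and distUH: "inj_on (\<lambda>i. UH lt (I i)) {..<k}"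
  defines "H \<equiv> (\<lambda>i. LH lt (I i)) ` {..<k} \<union> (\<lambda>i. UH lt (I i)) ` {..<k}"
  shows
    "(\<forall>i<k. \<forall>j<k. i \<noteq> j \<longrightarrow>
        (\<forall>h\<in>H - {LH lt (I i), LH lt (I j)}. lt (LH lt (I i)) h \<and> lt (LH lt (I j)) h) \<longrightarrow>
        (\<forall>t<k. \<not> is_minimal l r I k t))
     \<and>
     (\<forall>i<k. (\<forall>h\<in>H. h \<noteq> LH lt (I i) \<longrightarrow> lt (LH lt (I i)) h) \<longrightarrow>
        (\<forall>t<k. t \<noteq> i \<longrightarrow> \<not> is_minimal l r I k t) \<and>
        (is_minimal l r I k i \<longleftrightarrow>
           \<not> (\<exists>j<k. j \<noteq> i \<and> lt (LH lt (I j)) (UH lt (I i)))))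
     \<and>
     (\<forall>j<k. (\<forall>t<k. t \<noteq> j \<longrightarrow> lt (LH lt (I j)) (LH lt (I t))) \<longrightarrow>
        (\<exists>t<k. lt (UH lt (I t)) (LH lt (I j))) \<longrightarrow>
        (\<forall>t<k. lt (UH lt (I t)) (LH lt (I j)) \<longrightarrow> is_minimal l r I k t) \<and>
        (is_minimal l r I k j \<longleftrightarrow>
           \<not> (\<exists>t<k. t \<noteq> j \<and> lt (LH lt (I t)) (UH lt (I j)))) \<and>
        (\<forall>t<k. t \<noteq> j \<longrightarrow> \<not> lt (UH lt (I t)) (LH lt (I j)) \<longrightarrow> \<not> is_minimal l r I k t))"
proof -
  define L where "L i = LH lt (I i)" for i
  define U where "U i = UH lt (I i)" for i
  note irr = adm_irr[OF order] and tr = adm_tr[OF order] and tot = adm_tot[OF order]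
  have Lr: "\<exists>a. L i = Rgt a" if "i < k" for i
  proof -
    have "I i \<subseteq> E" "I i \<noteq> {}" using sub that by auto
    from LH_prop[OF finE order this] show ?thesis unfolding L_def by auto
  qed
  have Ur: "\<exists>a. U i = Lft a" if "i < k" for i
  proof -
    have "I i \<subseteq> E" "I i \<noteq> {}" using sub that by auto
    from UH_prop[OF finE order this] show ?thesis unfolding U_def by auto
  qed
  have Le: "L i \<in> endpts E" if "i < k" for i
  proof -
    have s: "I i \<subseteq> E" "I i \<noteq> {}" using sub that by auto
    from LH_prop[OF finE order s] s(1) show ?thesis unfolding L_def endpts_def by auto
  qed
  have Ue: "U i \<in> endpts E" if "i < k" for i
  proof -
    have s: "I i \<subseteq> E" "I i \<noteq> {}" using sub that by auto
    from UH_prop[OF finE order s] s(1) show ?thesis unfolding U_def endpts_def by auto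
  qed
  have LU: "L i \<noteq> U t" if "i < k" "t < k" for i t
    using Lr[OF that(1)] Ur[OF that(2)] by auto
  have slt: "set_lt l r (I i) (I t) \<longleftrightarrow> lt (L i) (U t)" if "i < k" "t < k" for i t
  proof -
    have "I i \<subseteq> E" "I i \<noteq> {}" "I t \<subseteq> E" "I t \<noteq> {}" using sub that by auto
    from set_lt_iff[OF finE order this] show ?thesis unfolding L_def U_def .
  qed
  have min: "is_minimal l r I k t \<longleftrightarrow> \<not> (\<exists>i<k. i \<noteq> t \<and> lt (L i) (U t))" if "t < k" for t
    unfolding is_minimal_def using slt[OF _ that] by auto
  have UH: "U t \<in> H" if "t < k" for t using that unfolding H_def U_def by auto
  have P1: "\<forall>i<k. \<forall>j<k. i \<noteq> j \<longrightarrow>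
        (\<forall>h\<in>H - {L i, L j}. lt (L i) h \<and> lt (L j) h) \<longrightarrow>
        (\<forall>t<k. \<not> is_minimal l r I k t)"
  proof (intro allI impI)
    fix i j t assume h: "i < k" "j < k" "i \<noteq> j" "\<forall>h\<in>H - {L i, L j}. lt (L i) h \<and> lt (L j) h" "t < k"
    have "U t \<in> H - {L i, L j}" using UH[OF h(5)] LU[OF h(1) h(5)] LU[OF h(2) h(5)] by auto
    then have "lt (L i) (U t)" "lt (L j) (U t)" using h(4) by auto
    then show "\<not> is_minimal l r I k t" using min[OF h(5)] h(1,2,3) by (cases "t = i") auto
  qed
  have P2: "\<forall>i<k. (\<forall>h\<in>H. h \<noteq> L i \<longrightarrow> lt (L i) h) \<longrightarrow>
        (\<forall>t<k. t \<noteq> i \<longrightarrow> \<not> is_minimal l r I k t) \<and>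
        (is_minimal l r I k i \<longleftrightarrow> \<not> (\<exists>j<k. j \<noteq> i \<and> lt (L j) (U i)))"
  proof (intro allI impI conjI)
    fix i t assume h: "i < k" "\<forall>h\<in>H. h \<noteq> L i \<longrightarrow> lt (L i) h" "t < k" "t \<noteq> i"
    then have "lt (L i) (U t)" using UH[OF h(3)] LU[OF h(1) h(3)] by auto
    then show "\<not> is_minimal l r I k t" using min[OF h(3)] h(1,4) by auto
  next
    fix i assume "i < k"
    then show "is_minimal l r I k i \<longleftrightarrow> \<not> (\<exists>j<k. j \<noteq> i \<and> lt (L j) (U i))" using min by auto
  qed
  have P3: "\<forall>j<k. (\<forall>t<k. t \<noteq> j \<longrightarrow> lt (L j) (L t)) \<longrightarrow>
        (\<exists>t<k. lt (U t) (L j)) \<longrightarrow>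
        (\<forall>t<k. lt (U t) (L j) \<longrightarrow> is_minimal l r I k t) \<and>
        (is_minimal l r I k j \<longleftrightarrow> \<not> (\<exists>t<k. t \<noteq> j \<and> lt (L t) (U j))) \<and>
        (\<forall>t<k. t \<noteq> j \<longrightarrow> \<not> lt (U t) (L j) \<longrightarrow> \<not> is_minimal l r I k t)"
  proof (intro allI impI conjI)
    fix j t assume h: "j < k" "\<forall>t<k. t \<noteq> j \<longrightarrow> lt (L j) (L t)" "t < k" "lt (U t) (L j)"
    show "is_minimal l r I k t"
    proof -
      have "\<not> lt (L i) (U t)" if "i < k" for i
      proof
        assume a: "lt (L i) (U t)"
        have li: "lt (L i) (L j)" using tr[rule_format, OF Le[OF that] Ue[OF h(3)] Le[OF h(1)] a h(4)] .
        show False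
        proof (cases "i = j")
          case True then show False using li irr Le[OF h(1)] by auto
        next
          case False
          then have "lt (L j) (L i)" using h(2) that by auto
          then have "lt (L j) (L j)" using tr[rule_format, OF Le[OF h(1)] Le[OF that] Le[OF h(1)] _ li] by simp
          then show False using irr Le[OF h(1)] by auto
        qed
      qed
      then show ?thesis using min[OF h(3)] by auto
    qed
  next
    fix j assume "j < k"
    then show "is_minimal l r I k j \<longleftrightarrow> \<not> (\<exists>t<k. t \<noteq> j \<and> lt (L t) (U j))" using min by auto
  next
    fix j t assume h: "j < k" "t < k" "t \<noteq> j" "\<not> lt (U t) (L j)"
    have "lt (L j) (U t) \<or> lt (U t) (L j)" using tot[rule_format, OF Le[OF h(1)] Ue[OF h(2)] LU[OF h(1) h(2)]] .
    then have "lt (L j) (U t)" using h(4) by simp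
    then show "\<not> is_minimal l r I k t" using min[OF h(2)] h(1,3) by auto
  qed
  show ?thesis using P1 P2 P3 unfolding L_def U_def by blast
qed

end
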